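(* There is no C-loop $L$ whose nucleus $N$ has index $2$ in $L$ (i.e. such that $N$ has exactly two cosets in $L$).
   Context: A C-loop is a loop satisfying $x(y(yz))=((xy)y)z$ for all $x,y,z$. The nucleus $N$ of a loop is the set of elements $a$ with $a(yz)=(ay)z$, $y(az)=(ya)z$, $y(za)=(yz)a$ for all $y,z$; in a C-loop it is a normal subloop, so its cosets form the factor loop $L/N$. *)

theory Defs
  imports Main
begin

definition loop :: "'a set \<Rightarrow> ('a \<Rightarrow> 'a \<Rightarrow> 'a) \<Rightarrow> 'a \<Rightarrow> bool" where
  "loop L m e \<longleftrightarrow>
     e \<in> L \<and>
     (\<forall>x\<in>L. \<forall>y\<in>L. m x y \<in> L) \<and>
     (\<forall>x\<in>L. m e x = x \<and> m x e = x) \<and>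
     (\<forall>a\<in>L. \<forall>b\<in>L. \<exists>!x. x \<in> L \<and> m a x = b) \<and>
     (\<forall>a\<in>L. \<forall>b\<in>L. \<exists>!y. y \<in> L \<and> m y a = b)"

definition c_loop :: "'a set \<Rightarrow> ('a \<Rightarrow> 'a \<Rightarrow> 'a) \<Rightarrow> 'a \<Rightarrow> bool" where
  "c_loop L m e \<longleftrightarrow> loop L m e \<and>
     (\<forall>x\<in>L. \<forall>y\<in>L. \<forall>z\<in>L. m x (m y (m y z)) = m (m (m x y) y) z)"

definition nucleus :: "'a set \<Rightarrow> ('a \<Rightarrow> 'a \<Rightarrow> 'a) \<Rightarrow> 'a set" where
  "nucleus L m = {a \<in> L. \<forall>y\<in>L. \<forall>z\<in>L.
      m a (m y z) = m (m a y) z \<and>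
      m y (m a z) = m (m y a) z \<and>
      m y (m z a) = m (m y z) a}"

definition lcosets :: "'a set \<Rightarrow> ('a \<Rightarrow> 'a \<Rightarrow> 'a) \<Rightarrow> 'a set \<Rightarrow> 'a set set" where
  "lcosets L m N = {(\<lambda>n. m a n) ` N | a. a \<in> L}"

end

theory Submission
  imports Defs
begin

context
  fixes L :: "'a set" and m :: "'a \<Rightarrow> 'a \<Rightarrow> 'a" (infixl "\<cdot>" 70) and e :: 'a
  assumes C: "c_loop L m e"
begin

lemma LP: "e \<in> L" "\<forall>x\<in>L. \<forall>y\<in>L. x\<cdot>y \<in> L" "\<forall>x\<in>L. e\<cdot>x = x \<and> x\<cdot>e = x"
  "\<forall>a\<in>L. \<forall>b\<in>L. \<exists>!x. x \<in> L \<and> a\<cdot>x = b" "\<forall>a\<in>L. \<forall>b\<in>L. \<exists>!y. y \<in> L \<and> y\<cdot>a = b"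
  "\<forall>x\<in>L. \<forall>y\<in>L. \<forall>z\<in>L. x\<cdot>(y\<cdot>(y\<cdot>z)) = ((x\<cdot>y)\<cdot>y)\<cdot>z"
  using C unfolding c_loop_def loop_def by simp_all

lemma cl: "x\<in>L \<Longrightarrow> y\<in>L \<Longrightarrow> x\<cdot>y \<in> L"
  using LP(2) by blast
lemma eL: "e \<in> L"
  using LP(1) .
lemma idl: "x\<in>L \<Longrightarrow> e\<cdot>x = x"
  using LP(3) by blast
lemma idr: "x\<in>L \<Longrightarrow> x\<cdot>e = x"
  using LP(3) by blast
lemma lcanc: "a\<in>L \<Longrightarrow> x\<in>L \<Longrightarrow> y\<in>L \<Longrightarrow> a\<cdot>x = a\<cdot>y \<Longrightarrow> x = y"
proof -
  assume h: "a\<in>L" "x\<in>L" "y\<in>L" "a\<cdot>x = a\<cdot>y"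
  have "\<exists>!z. z \<in> L \<and> a\<cdot>z = a\<cdot>x" using LP(4) h(1) cl[OF h(1,2)] by blast
  then obtain z where "\<And>w. w \<in> L \<and> a\<cdot>w = a\<cdot>x \<Longrightarrow> w = z" by blast
  thus ?thesis using h by metis
qed
lemma rcanc: "a\<in>L \<Longrightarrow> x\<in>L \<Longrightarrow> y\<in>L \<Longrightarrow> x\<cdot>a = y\<cdot>a \<Longrightarrow> x = y"
proof -
  assume h: "a\<in>L" "x\<in>L" "y\<in>L" "x\<cdot>a = y\<cdot>a"
  have "\<exists>!z. z \<in> L \<and> z\<cdot>a = x\<cdot>a" using LP(5) h(1) cl[OF h(2,1)] by blast
  then obtain z where "\<And>w. w \<in> L \<and> w\<cdot>a = x\<cdot>a \<Longrightarrow> w = z" by blast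
  thus ?thesis using h by metis
qed
lemma rsolve: "a\<in>L \<Longrightarrow> b\<in>L \<Longrightarrow> \<exists>x\<in>L. a\<cdot>x = b"
  using LP(4) by blast
lemma lalt: "y\<in>L \<Longrightarrow> z\<in>L \<Longrightarrow> y\<cdot>(y\<cdot>z) = (y\<cdot>y)\<cdot>z"
proof -
  assume "y\<in>L" "z\<in>L"
  hence "e\<cdot>(y\<cdot>(y\<cdot>z)) = ((e\<cdot>y)\<cdot>y)\<cdot>z" using LP(6) eL by blast
  thus ?thesis using idl cl \<open>y\<in>L\<close> \<open>z\<in>L\<close> by simp
qed
lemma ralt: "x\<in>L \<Longrightarrow> y\<in>L \<Longrightarrow> x\<cdot>(y\<cdot>y) = (x\<cdot>y)\<cdot>y"
proof -
  assume "y\<in>L" "x\<in>L"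
  hence "x\<cdot>(y\<cdot>(y\<cdot>e)) = ((x\<cdot>y)\<cdot>y)\<cdot>e" using LP(6) eL by blast
  thus ?thesis using idr cl \<open>y\<in>L\<close> \<open>x\<in>L\<close> by simp
qed

abbreviation "NN \<equiv> nucleus L m"

lemma nN: "n \<in> NN \<Longrightarrow> n \<in> L" unfolding nucleus_def by blast
lemma n1: "n \<in> NN \<Longrightarrow> y\<in>L \<Longrightarrow> z\<in>L \<Longrightarrow> n\<cdot>(y\<cdot>z) = (n\<cdot>y)\<cdot>z" unfolding nucleus_def by blast
lemma n2: "n \<in> NN \<Longrightarrow> y\<in>L \<Longrightarrow> z\<in>L \<Longrightarrow> y\<cdot>(n\<cdot>z) = (y\<cdot>n)\<cdot>z" unfolding nucleus_def by blast
lemma n3: "n \<in> NN \<Longrightarrow> y\<in>L \<Longrightarrow> z\<in>L \<Longrightarrow> y\<cdot>(z\<cdot>n) = (y\<cdot>z)\<cdot>n" unfolding nucleus_def by blast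
lemma eN: "e \<in> NN" unfolding nucleus_def using eL idl idr cl by auto

lemma key:
  assumes n: "n \<in> NN" and k: "k \<in> NN" and a: "a \<in> L" and h: "n\<cdot>a = k"
  shows "a \<in> NN"
proof -
  have nL: "n \<in> L" "k \<in> L" using n k nN by auto
  obtain u where u: "u \<in> L" "n\<cdot>u = e" using rsolve[OF nL(1) eL] by blast
  have "n\<cdot>(u\<cdot>n) = n\<cdot>e" using n1[OF n u(1) nL(1)] u idl idr nL by simp
  hence un: "u\<cdot>n = e" by (rule lcanc[OF nL(1) cl[OF u(1) nL(1)] eL])
  have u3: "y\<cdot>(z\<cdot>u) = (y\<cdot>z)\<cdot>u" if "y\<in>L" "z\<in>L" for y z
  proof -
    have "(y\<cdot>(z\<cdot>u))\<cdot>n = y\<cdot>z"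
      using n3[OF n that(1) cl[OF that(2) u(1)]] n3[OF n that(2) u(1)] un idr that by simp
    moreover have "((y\<cdot>z)\<cdot>u)\<cdot>n = y\<cdot>z"
      using n3[OF n cl[OF that] u(1)] un idr that cl by simp
    ultimately show ?thesis by (intro rcanc[OF nL(1) cl[OF that(1) cl[OF that(2) u(1)]] cl[OF cl[OF that] u(1)]]) simp
  qed
  have A1: "a\<cdot>(y\<cdot>z) = (a\<cdot>y)\<cdot>z" if "y\<in>L" "z\<in>L" for y z
  proof -
    have "n\<cdot>(a\<cdot>(y\<cdot>z)) = (k\<cdot>y)\<cdot>z"
      using n1[OF n a cl[OF that]] n1[OF k that] h by simp
    moreover have "n\<cdot>((a\<cdot>y)\<cdot>z) = (k\<cdot>y)\<cdot>z"
      using n1[OF n cl[OF a that(1)] that(2)] n1[OF n a that(1)] h by simp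
    ultimately show ?thesis by (intro lcanc[OF nL(1) cl[OF a cl[OF that]] cl[OF cl[OF a that(1)] that(2)]]) simp
  qed
  have wy: "y = (y\<cdot>u)\<cdot>n" if "y\<in>L" for y
    using n3[OF n that u(1)] un idr that by simp
  have A2: "y\<cdot>(a\<cdot>z) = (y\<cdot>a)\<cdot>z" if "y\<in>L" "z\<in>L" for y z
  proof -
    define w where "w = y\<cdot>u"
    have w: "w \<in> L" using cl that u w_def by simp
    have "y\<cdot>(a\<cdot>z) = (w\<cdot>n)\<cdot>(a\<cdot>z)" using wy that w_def by simp
    also have "\<dots> = w\<cdot>(n\<cdot>(a\<cdot>z))" using n2[OF n w cl[OF a that(2)]] by simp
    also have "\<dots> = w\<cdot>(k\<cdot>z)" using n1[OF n a that(2)] h by simp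
    also have "\<dots> = (w\<cdot>k)\<cdot>z" using n2[OF k w that(2)] by simp
    also have "\<dots> = ((w\<cdot>n)\<cdot>a)\<cdot>z" using n2[OF n w a] h by simp
    also have "\<dots> = (y\<cdot>a)\<cdot>z" using wy that w_def by simp
    finally show ?thesis .
  qed
  have A3: "y\<cdot>(z\<cdot>a) = (y\<cdot>z)\<cdot>a" if "y\<in>L" "z\<in>L" for y z
  proof -
    have za: "z\<cdot>a = (z\<cdot>u)\<cdot>k"
    proof -
      have "z\<cdot>a = ((z\<cdot>u)\<cdot>n)\<cdot>a" using wy[OF that(2)] by simp
      also have "\<dots> = (z\<cdot>u)\<cdot>k" using n2[OF n cl[OF that(2) u(1)] a] h by simp
      finally show ?thesis .
    qed
    have yza: "(y\<cdot>z)\<cdot>a = ((y\<cdot>z)\<cdot>u)\<cdot>k"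
    proof -
      have "(y\<cdot>z)\<cdot>a = (((y\<cdot>z)\<cdot>u)\<cdot>n)\<cdot>a" using wy[OF cl[OF that]] by simp
      also have "\<dots> = ((y\<cdot>z)\<cdot>u)\<cdot>k" using n2[OF n cl[OF cl[OF that] u(1)] a] h by simp
      finally show ?thesis .
    qed
    have "y\<cdot>(z\<cdot>a) = (y\<cdot>(z\<cdot>u))\<cdot>k" using za n3[OF k that(1) cl[OF that(2) u(1)]] by simp
    also have "\<dots> = ((y\<cdot>z)\<cdot>u)\<cdot>k" using u3 that by simp
    finally show ?thesis using yza by simp
  qed
  show ?thesis unfolding nucleus_def using a A1 A2 A3 by blast
qed

lemma main:
  assumes a: "a \<in> L" "a \<notin> NN" and cov: "\<And>x. x\<in>L \<Longrightarrow> x \<in> NN \<or> (\<exists>n\<in>NN. x = a\<cdot>n)"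
  shows False
proof -
  have sN: "a\<cdot>a \<in> NN"
  proof -
    from cov[OF cl[OF a(1) a(1)]] consider "a\<cdot>a \<in> NN" | n where "n\<in>NN" "a\<cdot>a = a\<cdot>n" by blast
    then show ?thesis
    proof cases
      case 1 thus ?thesis .
    next
      case 2 then have "a = n" using lcanc[OF a(1) a(1) nN[OF 2(1)]] by simp
      thus ?thesis using 2 a by simp
    qed
  qed
  have "\<forall>n\<in>NN. \<exists>p\<in>NN. n\<cdot>a = a\<cdot>p"
  proof
    fix n assume n: "n \<in> NN"
    from cov[OF cl[OF nN[OF n] a(1)]] show "\<exists>p\<in>NN. n\<cdot>a = a\<cdot>p" using key[OF n _ a(1)] a(2) by blast
  qed
  then obtain \<phi> where ph: "\<And>n. n\<in>NN \<Longrightarrow> \<phi> n \<in> NN" "\<And>n. n\<in>NN \<Longrightarrow> n\<cdot>a = a\<cdot>\<phi> n" by metis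
  define s where "s = a\<cdot>a"
  have sN': "s \<in> NN" and sL: "s \<in> L" using sN s_def nN by auto
  have as: "a\<cdot>s = s\<cdot>a" using lalt[OF a(1) a(1)] s_def by simp
  have P0: "(a\<cdot>n)\<cdot>a = s\<cdot>\<phi> n" if n: "n \<in> NN" for n
  proof -
    have "(a\<cdot>n)\<cdot>a = a\<cdot>(n\<cdot>a)" using n2[OF n a(1) a(1)] by simp
    also have "\<dots> = a\<cdot>(a\<cdot>\<phi> n)" using ph(2)[OF n] by simp
    also have "\<dots> = s\<cdot>\<phi> n" using lalt[OF a(1) nN[OF ph(1)[OF n]]] s_def by simp
    finally show ?thesis .
  qed
  have I1: "a\<cdot>(y\<cdot>z) = (a\<cdot>y)\<cdot>z" if y: "y\<in>L" and z: "z\<in>L" for y z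
  proof -
    from cov[OF y] consider "y \<in> NN" | n where "n\<in>NN" "y = a\<cdot>n" by blast
    then show ?thesis
    proof cases
      case 1
      note n = 1
      from cov[OF z] consider "z \<in> NN" | n' where "n'\<in>NN" "z = a\<cdot>n'" by blast
      then show ?thesis
      proof cases
        case 1 then show ?thesis using n3[OF 1 a(1) y] by simp
      next
        case 2
        note n' = 2(1)
        let ?p = "\<phi> y"
        have pL: "?p \<in> L" using ph(1)[OF n] nN by auto
        have "a\<cdot>(y\<cdot>(a\<cdot>n')) = a\<cdot>((y\<cdot>a)\<cdot>n')" using n1[OF n a(1) nN[OF n']] by simp
        also have "\<dots> = a\<cdot>((a\<cdot>?p)\<cdot>n')" using ph(2)[OF n] by simp
        also have "\<dots> = (a\<cdot>(a\<cdot>?p))\<cdot>n'" using n3[OF n' a(1) cl[OF a(1) pL]] by simp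
        also have "\<dots> = (a\<cdot>(y\<cdot>a))\<cdot>n'" using ph(2)[OF n] by simp
        also have "\<dots> = ((a\<cdot>y)\<cdot>a)\<cdot>n'" using n2[OF n a(1) a(1)] by simp
        also have "\<dots> = (a\<cdot>y)\<cdot>(a\<cdot>n')" using n3[OF n' cl[OF a(1) y] a(1)] by simp
        finally show ?thesis using 2 by simp
      qed
    next
      case 2
      note n = 2(1) and yy = 2(2)
      have nL: "n \<in> L" using nN n by auto
      from cov[OF z] consider "z \<in> NN" | n' where "n'\<in>NN" "z = a\<cdot>n'" by blast
      then show ?thesis
      proof cases
        case 1 then show ?thesis using n3[OF 1 a(1) y] by simp
      next
        case 2
        note n' = 2(1)
        let ?p = "\<phi> n"
        have pN: "?p \<in> NN" and pL: "?p \<in> L" using ph(1)[OF n] nN by auto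
        have "a\<cdot>((a\<cdot>n)\<cdot>(a\<cdot>n')) = a\<cdot>(((a\<cdot>n)\<cdot>a)\<cdot>n')" using n3[OF n' cl[OF a(1) nL] a(1)] by simp
        also have "\<dots> = a\<cdot>((s\<cdot>?p)\<cdot>n')" using P0[OF n] by simp
        also have "\<dots> = (a\<cdot>(s\<cdot>?p))\<cdot>n'" using n3[OF n' a(1) cl[OF sL pL]] by simp
        also have "\<dots> = ((a\<cdot>s)\<cdot>?p)\<cdot>n'" using n3[OF pN a(1) sL] by simp
        also have "\<dots> = ((s\<cdot>a)\<cdot>?p)\<cdot>n'" using as by simp
        also have "\<dots> = (s\<cdot>(a\<cdot>?p))\<cdot>n'" using n1[OF sN' a(1) pL] by simp
        also have "\<dots> = (s\<cdot>(n\<cdot>a))\<cdot>n'" using ph(2)[OF n] by simp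
        also have "\<dots> = ((s\<cdot>n)\<cdot>a)\<cdot>n'" using n1[OF sN' nL a(1)] by simp
        also have "\<dots> = ((a\<cdot>(a\<cdot>n))\<cdot>a)\<cdot>n'" using lalt[OF a(1) nL] s_def by simp
        also have "\<dots> = (a\<cdot>(a\<cdot>n))\<cdot>(a\<cdot>n')" using n3[OF n' cl[OF a(1) cl[OF a(1) nL]] a(1)] by simp
        finally show ?thesis using 2 yy by simp
      qed
    qed
  qed
  have I2: "y\<cdot>(a\<cdot>z) = (y\<cdot>a)\<cdot>z" if y: "y\<in>L" and z: "z\<in>L" for y z
  proof -
    from cov[OF y] consider "y \<in> NN" | n where "n\<in>NN" "y = a\<cdot>n" by blast
    then show ?thesis
    proof cases
      case 1 then show ?thesis using n1[OF 1 a(1) z] by simp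
    next
      case 2
      note n = 2(1) and yy = 2(2)
      have nL: "n \<in> L" using nN n by auto
      from cov[OF z] consider "z \<in> NN" | n' where "n'\<in>NN" "z = a\<cdot>n'" by blast
      then show ?thesis
      proof cases
        case 1 then show ?thesis using n3[OF 1 y a(1)] by simp
      next
        case 2
        note n' = 2(1)
        have n'L: "n' \<in> L" using nN n' by auto
        have "(a\<cdot>n)\<cdot>(a\<cdot>(a\<cdot>n')) = (a\<cdot>n)\<cdot>(s\<cdot>n')" using lalt[OF a(1) n'L] s_def by simp
        also have "\<dots> = ((a\<cdot>n)\<cdot>s)\<cdot>n'" using n3[OF n' cl[OF a(1) nL] sL] by simp
        also have "\<dots> = (((a\<cdot>n)\<cdot>a)\<cdot>a)\<cdot>n'" using ralt[OF cl[OF a(1) nL] a(1)] s_def by simp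
        also have "\<dots> = ((a\<cdot>n)\<cdot>a)\<cdot>(a\<cdot>n')" using n3[OF n' cl[OF cl[OF a(1) nL] a(1)] a(1)] by simp
        finally show ?thesis using 2 yy by simp
      qed
    qed
  qed
  have I3: "y\<cdot>(z\<cdot>a) = (y\<cdot>z)\<cdot>a" if y: "y\<in>L" and z: "z\<in>L" for y z
  proof -
    from cov[OF y] consider "y \<in> NN" | n where "n\<in>NN" "y = a\<cdot>n" by blast
    then show ?thesis
    proof cases
      case 1 then show ?thesis using n1[OF 1 z a(1)] by simp
    next
      case 2
      note n = 2(1) and yy = 2(2)
      have nL: "n \<in> L" using nN n by auto
      from cov[OF z] consider "z \<in> NN" | n' where "n'\<in>NN" "z = a\<cdot>n'" by blast
      then show ?thesis
      proof cases
        case 1 then show ?thesis using n2[OF 1 y a(1)] by simp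
      next
        case 2
        note n' = 2(1)
        have n'L: "n' \<in> L" using nN n' by auto
        let ?p = "\<phi> n" and ?q = "\<phi> n'"
        have pN: "?p \<in> NN" and pL: "?p \<in> L" using ph(1)[OF n] nN by auto
        have qN: "?q \<in> NN" and qL: "?q \<in> L" using ph(1)[OF n'] nN by auto
        have rN: "\<phi> ?p \<in> NN" and rL: "\<phi> ?p \<in> L" using ph(1)[OF pN] nN by auto
        have ns: "(a\<cdot>n)\<cdot>s = (a\<cdot>s)\<cdot>\<phi> ?p"
        proof -
          have "(a\<cdot>n)\<cdot>s = a\<cdot>(n\<cdot>s)" using n2[OF n a(1) sL] by simp
          also have "n\<cdot>s = (n\<cdot>a)\<cdot>a" using n1[OF n a(1) a(1)] s_def by simp
          also have "\<dots> = (a\<cdot>?p)\<cdot>a" using ph(2)[OF n] by simp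
          also have "\<dots> = s\<cdot>\<phi> ?p" using P0[OF pN] by simp
          also have "a\<cdot>(s\<cdot>\<phi> ?p) = (a\<cdot>s)\<cdot>\<phi> ?p" using n3[OF rN a(1) sL] by simp
          finally show ?thesis .
        qed
        have sp: "(s\<cdot>?p)\<cdot>a = (s\<cdot>a)\<cdot>\<phi> ?p"
        proof -
          have "(s\<cdot>?p)\<cdot>a = s\<cdot>(?p\<cdot>a)" using n1[OF sN' pL a(1)] by simp
          also have "\<dots> = s\<cdot>(a\<cdot>\<phi> ?p)" using ph(2)[OF pN] by simp
          also have "\<dots> = (s\<cdot>a)\<cdot>\<phi> ?p" using n1[OF sN' a(1) rL] by simp
          finally show ?thesis .
        qed
        have "(a\<cdot>n)\<cdot>((a\<cdot>n')\<cdot>a) = (a\<cdot>n)\<cdot>(s\<cdot>?q)" using P0[OF n'] by simp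
        also have "\<dots> = ((a\<cdot>n)\<cdot>s)\<cdot>?q" using n3[OF qN cl[OF a(1) nL] sL] by simp
        also have "\<dots> = ((s\<cdot>?p)\<cdot>a)\<cdot>?q" using ns sp as by simp
        also have "\<dots> = (s\<cdot>?p)\<cdot>(a\<cdot>?q)" using n3[OF qN cl[OF sL pL] a(1)] by simp
        also have "\<dots> = (s\<cdot>?p)\<cdot>(n'\<cdot>a)" using ph(2)[OF n'] by simp
        also have "\<dots> = ((s\<cdot>?p)\<cdot>n')\<cdot>a" using n2[OF n' cl[OF sL pL] a(1)] by simp
        also have "\<dots> = (((a\<cdot>n)\<cdot>a)\<cdot>n')\<cdot>a" using P0[OF n] by simp
        also have "\<dots> = ((a\<cdot>n)\<cdot>(a\<cdot>n'))\<cdot>a" using n3[OF n' cl[OF a(1) nL] a(1)] by simp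
        finally show ?thesis using 2 yy by simp
      qed
    qed
  qed
  have "a \<in> NN" unfolding nucleus_def using a(1) I1 I2 I3 by blast
  thus False using a(2) by simp
qed

end

theorem lemma2p7:
  fixes L :: "'a set" and m :: "'a \<Rightarrow> 'a \<Rightarrow> 'a" and e :: 'a
  assumes "c_loop L m e"
  shows "card (lcosets L m (nucleus L m)) \<noteq> 2"
proof
  assume c2: "card (lcosets L m (nucleus L m)) = 2"
  let ?N = "nucleus L m" and ?S = "lcosets L m (nucleus L m)"
  note C = assms
  have fin: "finite ?S" using c2 card.infinite by fastforce
  have NL: "?N \<subseteq> L" using nN[OF C] by blast
  have eN': "e \<in> ?N" using eN[OF C] .
  have NS: "?N \<in> ?S"
  proof -
    have "(\<lambda>n. m e n) ` ?N = ?N" using idl[OF C] NL by (force simp: image_iff)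
    thus ?thesis unfolding lcosets_def using eL[OF C] by blast
  qed
  show False
  proof (cases "L \<subseteq> ?N")
    case True
    have "?S = {L}"
    proof -
      have "(\<lambda>n. m x n) ` L = L" if "x \<in> L" for x
      proof
        show "(\<lambda>n. m x n) ` L \<subseteq> L" using cl[OF C that] by blast
        show "L \<subseteq> (\<lambda>n. m x n) ` L" using rsolve[OF C that] by force
      qed
      moreover have "?N = L" using True NL by blast
      ultimately show ?thesis unfolding lcosets_def using eL[OF C] by auto
    qed
    thus False using c2 by simp
  next
    case False
    then obtain a where a: "a \<in> L" "a \<notin> ?N" by blast
    let ?aN = "(\<lambda>n. m a n) ` ?N"
    have aS: "?aN \<in> ?S" unfolding lcosets_def using a by blast
    have "a \<in> ?aN" using idr[OF C a(1)] eN' by force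
    hence ne: "?aN \<noteq> ?N" using a by blast
    have Seq: "?S = {?N, ?aN}"
    proof -
      have "{?N, ?aN} \<subseteq> ?S" using NS aS by blast
      moreover have "card {?N, ?aN} = card ?S" using ne c2 by simp
      ultimately show ?thesis using card_subset_eq[OF fin] by blast
    qed
    have cov: "x \<in> ?N \<or> (\<exists>n\<in>?N. x = m a n)" if x: "x \<in> L" for x
    proof -
      have xS: "(\<lambda>n. m x n) ` ?N \<in> ?S" unfolding lcosets_def using x by blast
      have "x \<in> (\<lambda>n. m x n) ` ?N" using idr[OF C x] eN' by force
      thus ?thesis using xS Seq by auto
    qed
    show False using main[OF C a cov] by blast
  qed
qed

end
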